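(* Let $\mathcal{F}^\star$ be a probability distribution on $\mathbb{R}$ with cumulative distribution function $F$, mean $\mu$ and standard deviation $\sigma\in(0,\infty)$. Let $p,r\ge 1$ be integers and $n=pr$. Consider $n$ respondents partitioned into $p$ disjoint groups (cliques) $C_1,\dots,C_p$ each of size $r$; each respondent $i$ has an initial belief $X_i$, where $X_1,\dots,X_n$ are i.i.d. from $\mathcal{F}^\star$. After interaction each respondent $i\in C_k$ holds the updated belief $X_i'=\frac{1}{r}\sum_{j\in C_k}X_j$. Let $\hat{F}^r_p(t)=\frac{1}{n}\sum_{i=1}^n\mathbf{1}(X_i'\le t)$ be the empirical cdf of the updated beliefs. Let $F^r$ be the cdf of the mean of $r$ i.i.d. samples from $\mathcal{F}^\star$, let $\tilde{F}$ be the cdf of $N(\mu,\sigma^2)$ and $\tilde{F}^r$ the cdf of $N(\mu,\sigma^2/r)$. Then $$\mathbb{E}\big[W_1(F,\hat{F}^r_p)\big]\le \sigma\Big(1-\frac{1}{\sqrt{r}}\Big)+\frac{1}{\sqrt{p}}\int_{\mathbb{R}}\sqrt{F^r(t)(1-F^r(t))}\,dt+\sigma\sqrt{2(1-\rho^{F,\tilde{F}})}+\sigma\sqrt{\tfrac{2}{r}(1-\rho^{F^r,\tilde{F}^r})}.$$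
   Context: For probability measures on $\mathbb{R}$ with cdfs $G_1,G_2$, $W_1(G_1,G_2)=\int_{\mathbb{R}}|G_1(x)-G_2(x)|\,dx$. For two distributions $A,B$ on $\mathbb{R}$ with cdfs $G_A,G_B$, means $\mu_A,\mu_B$ and standard deviations $\sigma_A,\sigma_B>0$, $\rho^{G_A,G_B}$ denotes the Pearson correlation of the points of the quantile–quantile plot of $G_A$ and $G_B$, i.e. $\rho^{G_A,G_B}=\frac{1}{\sigma_A\sigma_B}\int_0^1 (G_A^{-1}(q)-\mu_A)(G_B^{-1}(q)-\mu_B)\,dq$, where $G^{-1}$ is the quantile function. *)

theory Defs
  imports "HOL-Probability.Probability"
begin

definition W1 :: "(real \<Rightarrow> real) \<Rightarrow> (real \<Rightarrow> real) \<Rightarrow> ennreal" where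
  "W1 G1 G2 = (\<integral>\<^sup>+ x. ennreal \<bar>G1 x - G2 x\<bar> \<partial>lborel)"

definition quantile :: "(real \<Rightarrow> real) \<Rightarrow> real \<Rightarrow> real" where
  "quantile G q = Inf {x. q \<le> G x}"

text \<open>Pearson correlation of the points of the QQ plot of GA and GB, given the
  means and standard deviations of the two distributions.\<close>
definition qq_corr ::
  "(real \<Rightarrow> real) \<Rightarrow> (real \<Rightarrow> real) \<Rightarrow> real \<Rightarrow> real \<Rightarrow> real \<Rightarrow> real \<Rightarrow> real" where
  "qq_corr GA GB muA muB sA sB =
     (1 / (sA * sB)) *
     (LINT q:{0<..<1}|lborel. (quantile GA q - muA) * (quantile GB q - muB))"

definition normal_cdf :: "real \<Rightarrow> real \<Rightarrow> real \<Rightarrow> real" where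
  "normal_cdf mu s = cdf (density lborel (normal_density mu s))"

definition mean_cdf :: "real measure \<Rightarrow> nat \<Rightarrow> real \<Rightarrow> real" where
  "mean_cdf M r = cdf (distr (PiM {..<r} (\<lambda>_. M)) borel (\<lambda>\<omega>. (\<Sum>i<r. \<omega> i) / real r))"

end

theory Submission
  imports Defs
begin

lemma coupling_W1:
  assumes P: "prob_space P"
    and X[measurable]: "X \<in> borel_measurable P" and Y[measurable]: "Y \<in> borel_measurable P"
  shows "(\<integral>\<^sup>+ t. ennreal \<bar>measure P {\<omega>\<in>space P. X \<omega> \<le> t} - measure P {\<omega>\<in>space P. Y \<omega> \<le> t}\<bar> \<partial>lborel)
         \<le> (\<integral>\<^sup>+ \<omega>. ennreal \<bar>X \<omega> - Y \<omega>\<bar> \<partial>P)"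
proof -
  interpret prob_space P by fact
  interpret pair_sigma_finite lborel P by unfold_locales
  let ?f = "\<lambda>t \<omega>. indicator {min (X \<omega>) (Y \<omega>) ..< max (X \<omega>) (Y \<omega>)} t :: ennreal"
  have meas: "case_prod ?f \<in> borel_measurable (lborel \<Otimes>\<^sub>M P)"
  proof -
    have "case_prod ?f = (\<lambda>z. indicator {z. min (X (snd z)) (Y (snd z)) \<le> fst z \<and> fst z < max (X (snd z)) (Y (snd z))} z)"
      by (auto simp: fun_eq_iff split: split_indicator)
    also have "\<dots> \<in> borel_measurable (lborel \<Otimes>\<^sub>M P)"
      by measurable
    finally show ?thesis .
  qed
  have pt: "ennreal \<bar>measure P {\<omega>\<in>space P. X \<omega> \<le> t} - measure P {\<omega>\<in>space P. Y \<omega> \<le> t}\<bar>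
      \<le> (\<integral>\<^sup>+ \<omega>. ?f t \<omega> \<partial>P)" for t
  proof -
    let ?A = "{\<omega>\<in>space P. X \<omega> \<le> t}" and ?B = "{\<omega>\<in>space P. Y \<omega> \<le> t}"
    have A: "?A \<in> events" and B: "?B \<in> events" by measurable measurable
    have "\<bar>prob ?A - prob ?B\<bar> \<le> prob (?A - ?B) + prob (?B - ?A)"
      using finite_measure_Diff'[OF A B] finite_measure_Diff'[OF B A]
        finite_measure_mono[of "?A \<inter> ?B" ?A] finite_measure_mono[of "?A \<inter> ?B" ?B] A B
      by (simp add: Int_commute)
    also have "prob (?A - ?B) + prob (?B - ?A) = prob ((?A - ?B) \<union> (?B - ?A))"
      using A B by (subst finite_measure_Union) auto
    also have "(?A - ?B) \<union> (?B - ?A) = {\<omega>\<in>space P. min (X \<omega>) (Y \<omega>) \<le> t \<and> t < max (X \<omega>) (Y \<omega>)}"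
      by auto
    finally have "ennreal \<bar>prob ?A - prob ?B\<bar> \<le> emeasure P {\<omega>\<in>space P. min (X \<omega>) (Y \<omega>) \<le> t \<and> t < max (X \<omega>) (Y \<omega>)}"
      by (simp add: emeasure_eq_measure)
    also have "\<dots> = (\<integral>\<^sup>+ \<omega>. indicator {\<omega>\<in>space P. min (X \<omega>) (Y \<omega>) \<le> t \<and> t < max (X \<omega>) (Y \<omega>)} \<omega> \<partial>P)"
      by (subst nn_integral_indicator) measurable
    also have "\<dots> = (\<integral>\<^sup>+ \<omega>. ?f t \<omega> \<partial>P)"
      by (intro nn_integral_cong) (auto split: split_indicator)
    finally show ?thesis .
  qed
  have "(\<integral>\<^sup>+ t. ennreal \<bar>measure P {\<omega>\<in>space P. X \<omega> \<le> t} - measure P {\<omega>\<in>space P. Y \<omega> \<le> t}\<bar> \<partial>lborel)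
      \<le> (\<integral>\<^sup>+ t. (\<integral>\<^sup>+ \<omega>. ?f t \<omega> \<partial>P) \<partial>lborel)"
    by (intro nn_integral_mono pt)
  also have "\<dots> = (\<integral>\<^sup>+ \<omega>. (\<integral>\<^sup>+ t. ?f t \<omega> \<partial>lborel) \<partial>P)"
    using Fubini'[OF meas] by simp
  also have "\<dots> = (\<integral>\<^sup>+ \<omega>. ennreal \<bar>X \<omega> - Y \<omega>\<bar> \<partial>P)"
    by (intro nn_integral_cong) (auto simp: max_def min_def)
  finally show ?thesis .
qed

lemma quantile_facts:
  assumes N: "real_distribution N" and q: "0 < q" "q < 1"
  shows "{y. q \<le> cdf N y} \<noteq> {}" "bdd_below {y. q \<le> cdf N y}"
proof -
  interpret real_distribution N by fact
  have "eventually (\<lambda>y. q < cdf N y) at_top"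
    using cdf_lim_at_top_prob q by (intro order_tendstoD) auto
  then obtain y where "q < cdf N y" by (metis eventually_at_top_linorder order_refl)
  then have "y \<in> {y. q \<le> cdf N y}" by simp
  then show "{y. q \<le> cdf N y} \<noteq> {}" by blast
  have "eventually (\<lambda>y. cdf N y < q) at_bot"
    using cdf_lim_at_bot q by (intro order_tendstoD) auto
  then obtain b where b: "\<And>y. y \<le> b \<Longrightarrow> cdf N y < q" by (metis eventually_at_bot_linorder)
  show "bdd_below {y. q \<le> cdf N y}"
  proof (rule bdd_belowI[of _ b])
    fix y assume "y \<in> {y. q \<le> cdf N y}"
    then show "b \<le> y" using b[of y] by force
  qed
qed

lemma quantile_le_iff:
  assumes N: "real_distribution N" and q: "0 < q" "q < 1"
  shows "quantile (cdf N) q \<le> x \<longleftrightarrow> q \<le> cdf N x"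
proof -
  interpret real_distribution N by fact
  let ?S = "{y. q \<le> cdf N y}"
  note ne = quantile_facts(1)[OF N q] and bdd = quantile_facts(2)[OF N q]
  have inS: "q \<le> cdf N (Inf ?S)"
  proof (rule tendsto_lowerbound)
    show "(cdf N \<longlongrightarrow> cdf N (Inf ?S)) (at_right (Inf ?S))"
      using cdf_is_right_cont[of "Inf ?S"] by (simp add: continuous_within)
    have "eventually (\<lambda>y. Inf ?S < y) (at_right (Inf ?S))"
      by (simp add: eventually_at_right_less)
    then show "eventually (\<lambda>y. q \<le> cdf N y) (at_right (Inf ?S))"
    proof (rule eventually_mono)
      fix y assume "Inf ?S < y"
      then obtain s where "s \<in> ?S" "s < y" using cInf_less_iff[OF ne bdd] by auto
      then show "q \<le> cdf N y" using cdf_nondecreasing[of s y] by auto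
    qed
  qed simp
  show ?thesis
  proof
    assume "quantile (cdf N) q \<le> x"
    then have "Inf ?S \<le> x" by (simp add: quantile_def)
    then show "q \<le> cdf N x" using inS cdf_nondecreasing[of "Inf ?S" x] by auto
  next
    assume "q \<le> cdf N x"
    then show "quantile (cdf N) q \<le> x" unfolding quantile_def by (intro cInf_lower bdd) auto
  qed
qed

lemma quantile_measurable:
  assumes N: "real_distribution N"
  shows "quantile (cdf N) \<in> borel_measurable borel"
proof -
  interpret real_distribution N by fact
  let ?Q = "quantile (cdf N)"
  have c1: "?Q q = ?Q 0" if "q \<le> 0" for q
  proof -
    have "{y. q \<le> cdf N y} = UNIV" "{y. 0 \<le> cdf N y} = UNIV" using that cdf_nonneg
      by (auto intro: order_trans)
    then show ?thesis by (simp add: quantile_def)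
  qed
  have c2: "?Q q = ?Q 2" if "1 < q" for q
  proof -
    have *: "cdf N y < q" "cdf N y < 2" for y using cdf_bounded_prob[of y] that by linarith+
    have "{y. q \<le> cdf N y} = {}" "{y. 2 \<le> cdf N y} = {}" using * by (simp_all add: not_le)
    then show ?thesis by (simp add: quantile_def)
  qed
  show ?thesis
  proof (rule borel_measurable_piecewise_mono[of "{{..0}, {0<..<1}, {1}, {1<..}}"])
    fix c :: "real set" assume c: "c \<in> {{..0}, {0<..<1}, {1}, {1<..}}"
    show "mono_on c ?Q"
    proof -
      { assume "c = {..0}" then have ?thesis
          by (intro mono_onI) (metis atMost_iff c1 order_refl) }
      moreover
      { assume "c = {1<..}" then have ?thesis
          by (intro mono_onI) (metis greaterThan_iff c2 order_refl) }
      moreover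
      { assume "c = {1}" then have ?thesis by (auto intro!: mono_onI) }
      moreover
      { assume "c = {0<..<1}"
        have "?Q a \<le> ?Q b" if ab: "0 < a" "a < 1" "0 < b" "b < 1" "a \<le> b" for a b
        proof -
          have "b \<le> cdf N (?Q b)" using quantile_le_iff[OF N ab(3,4), of "?Q b"] by simp
          then have "a \<le> cdf N (?Q b)" using ab by simp
          then show "?Q a \<le> ?Q b" using quantile_le_iff[OF N ab(1,2)] by simp
        qed
        then have ?thesis using \<open>c = {0<..<1}\<close> by (auto intro!: mono_onI) }
      ultimately show ?thesis using c by blast
    qed
  qed (auto simp: not_less)
qed

lemma U_emeasure:
  assumes "A \<in> sets borel"
  shows "emeasure (density lborel (indicator {0<..<1::real})) A = emeasure lborel ({0<..<1} \<inter> A)"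
  using assms
  by (subst emeasure_density) (auto simp: indicator_inter_arith[symmetric] intro!: nn_integral_indicator
       simp del: nn_integral_indicator)

lemma U_prob: "prob_space (density lborel (indicator {0<..<1::real}))"
  by (rule prob_spaceI) (simp add: U_emeasure)

lemma quantile_distr:
  assumes N: "real_distribution N"
  shows "distr (density lborel (indicator {0<..<1::real})) borel (quantile (cdf N)) = N"
proof -
  interpret real_distribution N by fact
  let ?U = "density lborel (indicator {0<..<1::real})"
  interpret U: prob_space ?U by (rule U_prob)
  have Qm[measurable]: "quantile (cdf N) \<in> borel_measurable borel" by (rule quantile_measurable[OF N])
  have rd: "real_distribution (distr ?U borel (quantile (cdf N)))"
    by (intro U.real_distribution_distr) simp
  show ?thesis
  proof (rule cdf_unique[OF rd N], rule ext)
    fix x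
    have set_eq: "{0<..<1} \<inter> (quantile (cdf N) -` {..x}) = {0<..<1} \<inter> {..cdf N x}"
      using quantile_le_iff[OF N] by auto
    have "emeasure (distr ?U borel (quantile (cdf N))) {..x} = emeasure ?U (quantile (cdf N) -` {..x})"
      by (subst emeasure_distr) auto
    also have "\<dots> = emeasure lborel ({0<..<1} \<inter> quantile (cdf N) -` {..x})"
      by (rule U_emeasure) (rule measurable_sets_borel[OF Qm], simp)
    also have "\<dots> = emeasure lborel ({0<..<1} \<inter> {..cdf N x})"
      by (simp only: set_eq)
    also have "\<dots> = ennreal (cdf N x)"
    proof (cases "cdf N x < 1")
      case True
      then have "{0<..<1} \<inter> {..cdf N x} = {0<..cdf N x}" by auto
      then show ?thesis using cdf_nonneg[of x] by simp
    next
      case False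
      then have "cdf N x = 1" using cdf_bounded_prob[of x] by simp
      moreover have "{0<..<1} \<inter> {..1::real} = {0<..<1}" by auto
      ultimately show ?thesis by simp
    qed
    finally show "cdf (distr ?U borel (quantile (cdf N))) x = cdf N x"
      unfolding cdf_def using cdf_nonneg[of x]
      by (simp add: measure_def)
  qed
qed

lemma abs_le_sqrt_sq:
  assumes P: "prob_space P" and f[measurable]: "f \<in> borel_measurable P"
    and int: "integrable P (\<lambda>x. (f x)^2)"
  shows "(\<integral>\<^sup>+ x. ennreal \<bar>f x\<bar> \<partial>P) \<le> ennreal (sqrt (\<integral>x. (f x)^2 \<partial>P))"
proof -
  interpret prob_space P by fact
  have fi: "integrable P f" by (rule square_integrable_imp_integrable[OF f int])
  have afi: "integrable P (\<lambda>x. \<bar>f x\<bar>)" using fi by simp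
  define a where "a = (\<integral>x. \<bar>f x\<bar> \<partial>P)"
  have a0: "0 \<le> a" unfolding a_def by simp
  have "0 \<le> (\<integral>x. (\<bar>f x\<bar> - a)^2 \<partial>P)" by simp
  also have "(\<integral>x. (\<bar>f x\<bar> - a)^2 \<partial>P) = (\<integral>x. (f x)^2 - 2 * a * \<bar>f x\<bar> + a^2 \<partial>P)"
    by (intro Bochner_Integration.integral_cong) (auto simp: power2_eq_square algebra_simps)
  also have "\<dots> = (\<integral>x. (f x)^2 \<partial>P) - 2 * a * a + a^2"
    using int afi by (simp add: a_def prob_space)
  finally have "a^2 \<le> (\<integral>x. (f x)^2 \<partial>P)" by (simp add: power2_eq_square)
  then have "a \<le> sqrt (\<integral>x. (f x)^2 \<partial>P)" using a0 real_le_rsqrt by blast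
  moreover have "(\<integral>\<^sup>+ x. ennreal \<bar>f x\<bar> \<partial>P) = ennreal a"
    unfolding a_def by (intro nn_integral_eq_integral afi) auto
  ultimately show ?thesis by simp
qed

lemma cdf_distr_eq:
  assumes "prob_space P" "X \<in> borel_measurable P"
  shows "cdf (distr P borel X) t = measure P {\<omega>\<in>space P. X \<omega> \<le> t}"
  using assms unfolding cdf_def
  by (subst measure_distr) (auto intro!: arg_cong[where f="measure P"])

lemma sq_integrable_shift:
  assumes "prob_space N" "integrable N (\<lambda>x. x^2)" "(\<lambda>x. x) \<in> borel_measurable N"
  shows "integrable N (\<lambda>x::real. (x - m)^2)"
proof -
  interpret prob_space N by fact
  have "integrable N (\<lambda>x. x)" by (rule square_integrable_imp_integrable) (use assms in auto)
  then have "integrable N (\<lambda>x. x^2 - 2 * m * x + m^2)" using assms by auto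
  then show ?thesis by (simp add: power2_eq_square algebra_simps)
qed

lemma W1_qq:
  assumes N1: "real_distribution N1" and N2: "real_distribution N2"
    and i1: "integrable N1 (\<lambda>x. x^2)" and i2: "integrable N2 (\<lambda>x. x^2)"
    and v1: "(\<integral>x. (x - m)^2 \<partial>N1) = s^2" and v2: "(\<integral>x. (x - m)^2 \<partial>N2) = s^2"
    and s: "s > 0"
  shows "W1 (cdf N1) (cdf N2) \<le> ennreal (sqrt (2 * s^2 * (1 - qq_corr (cdf N1) (cdf N2) m m s s)))"
proof -
  let ?U = "density lborel (indicator {0<..<1::real})"
  interpret U: prob_space ?U by (rule U_prob)
  define Q1 where "Q1 = quantile (cdf N1)"
  define Q2 where "Q2 = quantile (cdf N2)"
  have Q1m[measurable]: "Q1 \<in> borel_measurable borel" unfolding Q1_def by (rule quantile_measurable[OF N1])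
  have Q2m[measurable]: "Q2 \<in> borel_measurable borel" unfolding Q2_def by (rule quantile_measurable[OF N2])
  have d1: "distr ?U borel Q1 = N1" unfolding Q1_def by (rule quantile_distr[OF N1])
  have d2: "distr ?U borel Q2 = N2" unfolding Q2_def by (rule quantile_distr[OF N2])
  define a where "a q = Q1 q - m" for q
  define b where "b q = Q2 q - m" for q
  have am[measurable]: "a \<in> borel_measurable ?U" unfolding a_def by simp
  have bm[measurable]: "b \<in> borel_measurable ?U" unfolding b_def by simp
  have ia: "integrable ?U (\<lambda>q. (a q)^2)"
  proof -
    have "integrable N1 (\<lambda>x. (x - m)^2)"
      by (rule sq_integrable_shift) (use N1 i1 in \<open>auto simp: real_distribution_def measurable_cong_sets[OF real_distribution.events_eq_borel[OF N1] refl]\<close>)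
    then show ?thesis unfolding a_def using d1[symmetric]
      by (simp add: integrable_distr_eq)
  qed
  have ib: "integrable ?U (\<lambda>q. (b q)^2)"
  proof -
    have "integrable N2 (\<lambda>x. (x - m)^2)"
      by (rule sq_integrable_shift) (use N2 i2 in \<open>auto simp: real_distribution_def measurable_cong_sets[OF real_distribution.events_eq_borel[OF N2] refl]\<close>)
    then show ?thesis unfolding b_def using d2[symmetric]
      by (simp add: integrable_distr_eq)
  qed
  have Ia: "(\<integral>q. (a q)^2 \<partial>?U) = s^2"
  proof -
    have "(\<integral>x. (x-m)^2 \<partial>N1) = (\<integral>x. (x-m)^2 \<partial>(distr ?U borel Q1))" by (simp add: d1)
    also have "\<dots> = (\<integral>q. (Q1 q - m)^2 \<partial>?U)" by (rule integral_distr) auto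
    finally show ?thesis using v1 by (simp add: a_def)
  qed
  have Ib: "(\<integral>q. (b q)^2 \<partial>?U) = s^2"
  proof -
    have "(\<integral>x. (x-m)^2 \<partial>N2) = (\<integral>x. (x-m)^2 \<partial>(distr ?U borel Q2))" by (simp add: d2)
    also have "\<dots> = (\<integral>q. (Q2 q - m)^2 \<partial>?U)" by (rule integral_distr) auto
    finally show ?thesis using v2 by (simp add: b_def)
  qed
  have iab2: "integrable ?U (\<lambda>q. (a q - b q)^2)"
  proof (rule Bochner_Integration.integrable_bound[where f="\<lambda>q. 2 * (a q)^2 + 2 * (b q)^2"])
    show "integrable ?U (\<lambda>q. 2 * (a q)^2 + 2 * (b q)^2)" using ia ib by auto
    show "AE q in ?U. norm ((a q - b q)^2) \<le> norm (2 * (a q)^2 + 2 * (b q)^2)"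
    proof (intro AE_I2)
      fix q
      have "(a q - b q)^2 \<le> 2 * (a q)^2 + 2 * (b q)^2"
        using sum_squares_ge_zero[of "a q + b q" 0] by (simp add: power2_eq_square algebra_simps)
      then show "norm ((a q - b q)^2) \<le> norm (2 * (a q)^2 + 2 * (b q)^2)" by simp
    qed
  qed simp
  have ab_eq: "(\<lambda>q. a q * b q) = (\<lambda>q. ((a q)^2 + (b q)^2 - (a q - b q)^2) / 2)"
    by (auto simp: power2_eq_square algebra_simps)
  have iab: "integrable ?U (\<lambda>q. a q * b q)"
    unfolding ab_eq using ia ib iab2 by auto
  have expand: "(\<integral>q. (a q - b q)^2 \<partial>?U) = (\<integral>q. (a q)^2 \<partial>?U) + (\<integral>q. (b q)^2 \<partial>?U) - 2 * (\<integral>q. a q * b q \<partial>?U)"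
  proof -
    have "(\<lambda>q. (a q - b q)^2) = (\<lambda>q. (a q)^2 + (b q)^2 - 2 * (a q * b q))"
      by (auto simp: power2_eq_square algebra_simps)
    then show ?thesis using ia ib iab by simp
  qed
  have cross: "(\<integral>q. a q * b q \<partial>?U) = (LINT q:{0<..<1}|lborel. (quantile (cdf N1) q - m) * (quantile (cdf N2) q - m))"
  proof -
    have Ueq: "?U = density lborel (\<lambda>x. ennreal (indicator {0<..<1::real} x))"
      by (simp add: ennreal_indicator)
    show ?thesis
      unfolding set_lebesgue_integral_def a_def b_def Q1_def Q2_def Ueq
      by (subst integral_density) (auto simp: Q1_def[symmetric] Q2_def[symmetric])
  qed
  have qq: "qq_corr (cdf N1) (cdf N2) m m s s = (\<integral>q. a q * b q \<partial>?U) / s^2"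
    unfolding qq_corr_def cross by (simp add: power2_eq_square)
  have total: "(\<integral>q. (Q1 q - Q2 q)^2 \<partial>?U) = 2 * s^2 * (1 - qq_corr (cdf N1) (cdf N2) m m s s)"
  proof -
    have "(\<lambda>q. (Q1 q - Q2 q)^2) = (\<lambda>q. (a q - b q)^2)" by (auto simp: a_def b_def)
    then show ?thesis using expand Ia Ib qq s by (simp add: field_simps)
  qed
  have "W1 (cdf N1) (cdf N2) = (\<integral>\<^sup>+ t. ennreal \<bar>measure ?U {\<omega>\<in>space ?U. Q1 \<omega> \<le> t} - measure ?U {\<omega>\<in>space ?U. Q2 \<omega> \<le> t}\<bar> \<partial>lborel)"
    unfolding W1_def
    by (subst (1 2) cdf_distr_eq[symmetric, OF U.prob_space_axioms]) (auto simp: d1 d2)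
  also have "\<dots> \<le> (\<integral>\<^sup>+ q. ennreal \<bar>Q1 q - Q2 q\<bar> \<partial>?U)"
    by (rule coupling_W1[OF U.prob_space_axioms]) auto
  also have "\<dots> \<le> ennreal (sqrt (\<integral>q. (Q1 q - Q2 q)^2 \<partial>?U))"
  proof (rule abs_le_sqrt_sq[OF U.prob_space_axioms])
    have "(\<lambda>q. (Q1 q - Q2 q)^2) = (\<lambda>q. (a q - b q)^2)" by (auto simp: a_def b_def)
    then show "integrable ?U (\<lambda>q. (Q1 q - Q2 q)^2)" using iab2 by simp
  qed simp
  finally show ?thesis by (simp only: total)
qed

lemma PiM_component_integral:
  fixes g :: "'a \<Rightarrow> real"
  assumes M: "prob_space M" and I: "i \<in> I" and [measurable]: "g \<in> borel_measurable M"
  shows "integrable (PiM I (\<lambda>_. M)) (\<lambda>\<omega>. g (\<omega> i)) \<longleftrightarrow> integrable M g"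
    and "(\<integral>\<omega>. g (\<omega> i) \<partial>PiM I (\<lambda>_. M)) = (\<integral>x. g x \<partial>M)"
proof -
  have d: "distr (PiM I (\<lambda>_. M)) M (\<lambda>\<omega>. \<omega> i) = M"
    using distr_PiM_component[of I "\<lambda>_. M" i] M I by simp
  have m: "(\<lambda>\<omega>. \<omega> i) \<in> measurable (PiM I (\<lambda>_. M)) M" using I by measurable
  show "integrable (PiM I (\<lambda>_. M)) (\<lambda>\<omega>. g (\<omega> i)) \<longleftrightarrow> integrable M g"
    using integrable_distr_eq[OF m, of g] d by simp
  show "(\<integral>\<omega>. g (\<omega> i) \<partial>PiM I (\<lambda>_. M)) = (\<integral>x. g x \<partial>M)"
    using integral_distr[OF m, of g] d by simp
qed

lemma PiM_cross_integral:
  fixes f :: "'a \<Rightarrow> real"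
  assumes M: "prob_space M" and I: "finite I" "i \<in> I" "j \<in> I" "i \<noteq> j"
    and fi: "integrable M f"
  shows "integrable (PiM I (\<lambda>_. M)) (\<lambda>\<omega>. f (\<omega> i) * f (\<omega> j))"
    and "(\<integral>\<omega>. f (\<omega> i) * f (\<omega> j) \<partial>PiM I (\<lambda>_. M)) = (\<integral>x. f x \<partial>M)^2"
proof -
  interpret prob_space M by fact
  interpret product_sigma_finite "\<lambda>_. M" by unfold_locales
  define h where "h k = (if k = i \<or> k = j then f else (\<lambda>_. 1))" for k
  have eq: "(\<Prod>k\<in>I. h k (\<omega> k)) = f (\<omega> i) * f (\<omega> j)" for \<omega>
  proof -
    have "(\<Prod>k\<in>I. h k (\<omega> k)) = (\<Prod>k\<in>{i,j}. h k (\<omega> k))"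
      using I by (intro prod.mono_neutral_right) (auto simp: h_def)
    then show ?thesis using I by (simp add: h_def)
  qed
  have hi: "integrable M (h k)" for k using fi by (auto simp: h_def)
  show "integrable (PiM I (\<lambda>_. M)) (\<lambda>\<omega>. f (\<omega> i) * f (\<omega> j))"
    using product_integrable_prod[OF I(1), of h] hi by (simp add: eq)
  have "(\<integral>\<omega>. f (\<omega> i) * f (\<omega> j) \<partial>PiM I (\<lambda>_. M)) = (\<Prod>k\<in>I. integral\<^sup>L M (h k))"
    using product_integral_prod[OF I(1), of h] hi by (simp add: eq)
  also have "\<dots> = (\<Prod>k\<in>{i,j}. integral\<^sup>L M (h k))"
    using I by (intro prod.mono_neutral_right) (auto simp: h_def prob_space)
  also have "\<dots> = (\<integral>x. f x \<partial>M)^2" using I by (simp add: h_def power2_eq_square)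
  finally show "(\<integral>\<omega>. f (\<omega> i) * f (\<omega> j) \<partial>PiM I (\<lambda>_. M)) = (\<integral>x. f x \<partial>M)^2" .
qed

lemma PiM_sum_sq:
  fixes f :: "real \<Rightarrow> real"
  assumes M: "prob_space M" and I: "finite I"
    and fm[measurable]: "f \<in> borel_measurable M"
    and f2: "integrable M (\<lambda>x. (f x)^2)" and f0: "(\<integral>x. f x \<partial>M) = 0"
  shows "integrable (PiM I (\<lambda>_. M)) (\<lambda>\<omega>. (\<Sum>i\<in>I. f (\<omega> i))^2)"
    and "(\<integral>\<omega>. (\<Sum>i\<in>I. f (\<omega> i))^2 \<partial>PiM I (\<lambda>_. M)) = real (card I) * (\<integral>x. (f x)^2 \<partial>M)"
proof -
  interpret prob_space M by fact
  have fi: "integrable M f" by (rule square_integrable_imp_integrable[OF fm f2])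
  have sq: "(\<Sum>i\<in>I. f (\<omega> i))^2 = (\<Sum>i\<in>I. \<Sum>j\<in>I. f (\<omega> i) * f (\<omega> j))" for \<omega>
    by (simp add: power2_eq_square sum_product)
  have int_ij: "integrable (PiM I (\<lambda>_. M)) (\<lambda>\<omega>. f (\<omega> i) * f (\<omega> j))" if "i \<in> I" "j \<in> I" for i j
  proof (cases "i = j")
    case True
    then show ?thesis using PiM_component_integral(1)[OF M \<open>i \<in> I\<close>, of "\<lambda>x. f x * f x"] f2
      by (simp add: power2_eq_square)
  next
    case False
    then show ?thesis using PiM_cross_integral(1)[OF M I that False fi] by simp
  qed
  have int_val: "(\<integral>\<omega>. f (\<omega> i) * f (\<omega> j) \<partial>PiM I (\<lambda>_. M)) = (if i = j then (\<integral>x. (f x)^2 \<partial>M) else 0)"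
    if "i \<in> I" "j \<in> I" for i j
  proof (cases "i = j")
    case True
    then show ?thesis using PiM_component_integral(2)[OF M \<open>i \<in> I\<close>, of "\<lambda>x. f x * f x"]
      by (simp add: power2_eq_square)
  next
    case False
    then show ?thesis using PiM_cross_integral(2)[OF M I that False fi] f0 by simp
  qed
  show "integrable (PiM I (\<lambda>_. M)) (\<lambda>\<omega>. (\<Sum>i\<in>I. f (\<omega> i))^2)"
    unfolding sq by (intro Bochner_Integration.integrable_sum int_ij)
  have "(\<integral>\<omega>. (\<Sum>i\<in>I. f (\<omega> i))^2 \<partial>PiM I (\<lambda>_. M))
      = (\<Sum>i\<in>I. \<Sum>j\<in>I. (\<integral>\<omega>. f (\<omega> i) * f (\<omega> j) \<partial>PiM I (\<lambda>_. M)))"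
    unfolding sq
    by (subst Bochner_Integration.integral_sum)
       (auto intro!: Bochner_Integration.integrable_sum sum.cong Bochner_Integration.integral_sum int_ij)
  also have "\<dots> = (\<Sum>i\<in>I. \<Sum>j\<in>I. (if i = j then (\<integral>x. (f x)^2 \<partial>M) else 0))"
    by (intro sum.cong refl) (simp add: int_val)
  also have "\<dots> = real (card I) * (\<integral>x. (f x)^2 \<partial>M)"
    using I by (simp add: sum.delta)
  finally show "(\<integral>\<omega>. (\<Sum>i\<in>I. f (\<omega> i))^2 \<partial>PiM I (\<lambda>_. M)) = real (card I) * (\<integral>x. (f x)^2 \<partial>M)" .
qed

lemma normal_facts:
  assumes s: "s > 0"
  shows "real_distribution (density lborel (normal_density m s))"
    and "integrable (density lborel (normal_density m s)) (\<lambda>x. x^2)"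
    and "(\<integral>x. (x - m)^2 \<partial>density lborel (normal_density m s)) = s^2"
proof -
  show "real_distribution (density lborel (normal_density m s))"
    unfolding real_distribution_def real_distribution_axioms_def
    using prob_space_normal_density[OF s] by simp
  have i: "integrable lborel (\<lambda>x. normal_density m s x * (x - m)^k)" for k
    by (rule integrable_normal_moment[OF s])
  have "integrable lborel (\<lambda>x. normal_density m s x * (x - m)^2 + 2 * m * (normal_density m s x * (x - m)^1)
      + m^2 * (normal_density m s x * (x - m)^0))"
    using i[of 2] i[of 1] i[of 0] by (intro Bochner_Integration.integrable_add Bochner_Integration.integrable_mult_right) auto
  also have "(\<lambda>x. normal_density m s x * (x - m)^2 + 2 * m * (normal_density m s x * (x - m)^1)
      + m^2 * (normal_density m s x * (x - m)^0)) = (\<lambda>x. normal_density m s x *\<^sub>R x^2)"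
    by (auto simp: fun_eq_iff power2_eq_square algebra_simps)
  finally show "integrable (density lborel (normal_density m s)) (\<lambda>x. x^2)"
    by (subst integrable_density) auto
  have "(\<integral>x. (x - m)^2 \<partial>density lborel (normal_density m s)) = (\<integral>x. normal_density m s x * (x - m)^(2*1) \<partial>lborel)"
    by (subst integral_density) auto
  also have "\<dots> = s^2"
    using integral_normal_moment_even[OF s, of m 1] s by (simp add: field_simps)
  finally show "(\<integral>x. (x - m)^2 \<partial>density lborel (normal_density m s)) = s^2" .
qed

lemma normal_cdf_affine:
  assumes s: "s > 0"
  shows "normal_cdf m s t = measure (density lborel std_normal_density) {x. m + s * x \<le> t}"
proof -
  let ?P = "density lborel std_normal_density"
  interpret P: prob_space ?P by (rule prob_space_normal_density) simp
  have d0: "distributed ?P lborel (\<lambda>x. x) std_normal_density"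
    unfolding distributed_def by (simp add: distr_id2)
  have "distributed ?P lborel (\<lambda>x. m + s * x) (normal_density (m + s * 0) (\<bar>s\<bar> * 1))"
    by (rule P.normal_density_affine[OF d0]) (use s in auto)
  then have d: "distr ?P lborel (\<lambda>x. m + s * x) = density lborel (normal_density m s)"
    using s by (simp add: distributed_def)
  have "normal_cdf m s t = measure (distr ?P lborel (\<lambda>x. m + s * x)) {..t}"
    unfolding normal_cdf_def cdf_def d ..
  also have "\<dots> = measure ?P {x. m + s * x \<le> t}"
    by (subst measure_distr) (auto intro!: arg_cong[where f="measure ?P"])
  finally show ?thesis .
qed

lemma normal_W1:
  assumes s: "\<sigma> > 0" and r: "r \<ge> 1"
  shows "W1 (normal_cdf \<mu> \<sigma>) (normal_cdf \<mu> (\<sigma> / sqrt r)) \<le> ennreal (\<sigma> * (1 - 1 / sqrt r))"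
proof -
  let ?P = "density lborel std_normal_density"
  interpret P: prob_space ?P by (rule prob_space_normal_density) simp
  have sr: "\<sigma> / sqrt r > 0" using s r by simp
  have sp: "space ?P = UNIV" by simp
  have "W1 (normal_cdf \<mu> \<sigma>) (normal_cdf \<mu> (\<sigma> / sqrt r)) =
     (\<integral>\<^sup>+ t. ennreal \<bar>measure ?P {x\<in>space ?P. \<mu> + \<sigma> * x \<le> t} - measure ?P {x\<in>space ?P. \<mu> + (\<sigma> / sqrt r) * x \<le> t}\<bar> \<partial>lborel)"
    unfolding W1_def normal_cdf_affine[OF s] normal_cdf_affine[OF sr] sp by simp
  also have "\<dots> \<le> (\<integral>\<^sup>+ x. ennreal \<bar>(\<mu> + \<sigma> * x) - (\<mu> + (\<sigma> / sqrt r) * x)\<bar> \<partial>?P)"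
    by (rule coupling_W1[OF P.prob_space_axioms]) auto
  also have "\<dots> = (\<integral>\<^sup>+ x. ennreal (\<sigma> * (1 - 1 / sqrt r)) * ennreal \<bar>x\<bar> \<partial>?P)"
  proof (intro nn_integral_cong)
    fix x
    have c: "0 \<le> \<sigma> * (1 - 1 / sqrt r)" using s r by (simp add: field_simps)
    have "\<bar>(\<mu> + \<sigma> * x) - (\<mu> + (\<sigma> / sqrt r) * x)\<bar> = \<bar>\<sigma> * (1 - 1 / sqrt r) * x\<bar>"
      by (simp add: algebra_simps)
    also have "\<dots> = \<sigma> * (1 - 1 / sqrt r) * \<bar>x\<bar>"
    proof -
      have "1 / sqrt r \<le> 1" using r by (simp add: divide_le_eq)
      then show ?thesis using s by (simp add: abs_mult)
    qed
    finally show "ennreal \<bar>(\<mu> + \<sigma> * x) - (\<mu> + (\<sigma> / sqrt r) * x)\<bar> = ennreal (\<sigma> * (1 - 1 / sqrt r)) * ennreal \<bar>x\<bar>"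
      using c by (simp add: ennreal_mult)
  qed
  also have "\<dots> = ennreal (\<sigma> * (1 - 1 / sqrt r)) * (\<integral>\<^sup>+ x. ennreal \<bar>x\<bar> \<partial>?P)"
    by (rule nn_integral_cmult) simp
  also have "\<dots> \<le> ennreal (\<sigma> * (1 - 1 / sqrt r)) * ennreal (sqrt (\<integral>x. x^2 \<partial>?P))"
  proof (intro mult_left_mono abs_le_sqrt_sq[OF P.prob_space_axioms])
    show "integrable ?P (\<lambda>x. x^2)"
      using integrable_std_normal_moment[of 2] by (subst integrable_density) auto
  qed auto
  also have "(\<integral>x. x^2 \<partial>?P) = 1"
  proof -
    have "(\<integral>x. x^2 \<partial>?P) = (\<integral>x. std_normal_density x * x^(2*1) \<partial>lborel)"
      by (subst integral_density) auto
    also have "\<dots> = 1" using integral_std_normal_moment_even[of 1] by simp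
    finally show ?thesis .
  qed
  finally show ?thesis by simp
qed

lemma mean_dist_facts:
  fixes M :: "real measure" and r :: nat
  assumes M_prob: "prob_space M" and M_borel: "sets M = sets borel"
    and sq_int: "integrable M (\<lambda>x. x ^ 2)"
    and mu: "\<mu> = integral\<^sup>L M (\<lambda>x. x)"
    and var: "(\<integral>x. (x - \<mu>)^2 \<partial>M) = \<sigma>^2"
    and r: "r \<ge> 1"
  defines "D \<equiv> distr (PiM {..<r} (\<lambda>_. M)) borel (\<lambda>\<omega>. (\<Sum>i<r. \<omega> i) / real r)"
  shows "real_distribution D" "integrable D (\<lambda>x. x^2)" "(\<integral>x. (x - \<mu>)^2 \<partial>D) = (\<sigma> / sqrt r)^2"
    "cdf D = mean_cdf M r"
proof -
  interpret M: prob_space M by fact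
  have Mb[measurable_cong]: "sets M = sets borel" by fact
  interpret P: prob_space "PiM {..<r} (\<lambda>_. M)" by (rule prob_space_PiM) (rule M_prob)
  have Sm[measurable]: "(\<lambda>\<omega>. (\<Sum>i<r. \<omega> i) / real r) \<in> borel_measurable (PiM {..<r} (\<lambda>_. M))"
    by measurable
  show rd: "real_distribution D" unfolding D_def by (rule P.real_distribution_distr[OF Sm])
  show "cdf D = mean_cdf M r" unfolding D_def mean_cdf_def ..
  have xi: "integrable M (\<lambda>x. x)" by (rule M.square_integrable_imp_integrable[OF _ sq_int]) simp
  have f2: "integrable M (\<lambda>x. (x - \<mu>)^2)"
    by (rule sq_integrable_shift[OF M_prob sq_int]) simp
  have f0: "(\<integral>x. x - \<mu> \<partial>M) = 0" using xi mu by (simp add: M.prob_space)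
  note S = PiM_sum_sq[OF M_prob finite_lessThan[of r], of "\<lambda>x. x - \<mu>", OF _ f2 f0]
  have eq: "((\<Sum>i<r. \<omega> i) / real r - \<mu>)^2 = (\<Sum>i<r. \<omega> i - \<mu>)^2 / (real r)^2" for \<omega>
  proof -
    have "(\<Sum>i<r. \<omega> i) / real r - \<mu> = (\<Sum>i<r. \<omega> i - \<mu>) / real r"
      using r by (simp add: sum_subtractf field_simps)
    then show ?thesis by (simp add: power_divide)
  qed
  have iD: "integrable D (\<lambda>x. (x - \<mu>)^2)"
    unfolding D_def using S(1)
    by (subst integrable_distr_eq[OF Sm]) (auto simp: eq)
  show "(\<integral>x. (x - \<mu>)^2 \<partial>D) = (\<sigma> / sqrt r)^2"
  proof -
    have "(\<integral>x. (x - \<mu>)^2 \<partial>D) = (\<integral>\<omega>. (\<Sum>i<r. \<omega> i - \<mu>)^2 / (real r)^2 \<partial>PiM {..<r} (\<lambda>_. M))"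
      unfolding D_def by (subst integral_distr[OF Sm]) (auto simp: eq)
    also have "\<dots> = real r * \<sigma>^2 / (real r)^2"
      using S(2) var by simp
    also have "\<dots> = (\<sigma> / sqrt r)^2" using r by (simp add: power_divide power2_eq_square)
    finally show ?thesis .
  qed
  interpret D: real_distribution D by (rule rd)
  have "integrable D (\<lambda>x. x - \<mu>)"
    by (rule D.square_integrable_imp_integrable[OF _ iD]) simp
  then have "integrable D (\<lambda>x. (x - \<mu>)^2 + 2 * \<mu> * (x - \<mu>) + \<mu>^2)"
    using iD by auto
  then show "integrable D (\<lambda>x. x^2)" by (simp add: power2_eq_square algebra_simps)
qed

lemma PiM_coords_indep:
  fixes M :: "real measure"
  assumes M: "prob_space M" and Mb: "sets M = sets borel" and I: "I \<noteq> {}"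
  shows "prob_space.indep_vars (PiM I (\<lambda>_. M)) (\<lambda>_. M) (\<lambda>i \<omega>. \<omega> i) I"
proof -
  interpret P: prob_space "PiM I (\<lambda>_. M)" by (rule prob_space_PiM) (rule M)
  have spM: "space M = UNIV" using sets_eq_imp_space_eq[OF Mb] by simp
  define X where "X i = (if i \<in> I then (\<lambda>\<omega>. \<omega> i) else (\<lambda>\<omega>. 0::real))" for i
  have rv: "P.random_variable M (X i)" for i
    by (cases "i \<in> I") (auto simp: X_def spM)
  have "distr (PiM I (\<lambda>_. M)) (PiM I (\<lambda>_. M)) (\<lambda>x. \<lambda>i\<in>I. X i x) = distr (PiM I (\<lambda>_. M)) (PiM I (\<lambda>_. M)) (\<lambda>x. x)"
    by (intro distr_cong) (auto simp: X_def space_PiM PiE_def extensional_def restrict_def fun_eq_iff)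
  also have "\<dots> = PiM I (\<lambda>_. M)" by simp
  also have "\<dots> = PiM I (\<lambda>i. distr (PiM I (\<lambda>_. M)) M (X i))"
  proof (intro PiM_cong refl)
    fix i assume "i \<in> I"
    then show "M = distr (PiM I (\<lambda>_. M)) M (X i)"
      using distr_PiM_component[of I "\<lambda>_. M" i] M by (simp add: X_def)
  qed
  finally have "P.indep_vars (\<lambda>_. M) X I"
    by (subst P.indep_vars_iff_distr_eq_PiM[OF I rv])
  then show ?thesis
    by (rule P.indep_vars_cong[THEN iffD1, rotated -1]) (auto simp: X_def)
qed

lemma block_distr:
  fixes M :: "real measure"
  assumes M: "prob_space M" and Mb: "sets M = sets borel"
    and B: "B \<subseteq> I" "finite B" "card B = r"
  shows "distr (PiM I (\<lambda>_. M)) borel (\<lambda>\<omega>. (\<Sum>j\<in>B. \<omega> j) / real r)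
       = distr (PiM {..<r} (\<lambda>_. M)) borel (\<lambda>\<omega>. (\<Sum>i<r. \<omega> i) / real r)"
proof -
  have Mb'[measurable_cong]: "sets M = sets borel" by fact
  obtain h where h: "bij_betw h {..<r} B"
    using ex_bij_betw_nat_finite[OF B(2)] B(3) by (auto simp: atLeast0LessThan)
  have hinj: "inj_on h {..<r}" and hf: "h \<in> {..<r} \<rightarrow> I"
    using h B(1) by (auto simp: bij_betw_def)
  define T where "T \<omega> = (\<lambda>i\<in>{..<r}. \<omega> (h i))" for \<omega> :: "'a \<Rightarrow> real"
  have d: "distr (PiM I (\<lambda>_. M)) (PiM {..<r} (\<lambda>_. M)) T = PiM {..<r} (\<lambda>_. M)"
    using distr_PiM_reindex[of I "\<lambda>_. M" h "{..<r}"] M hinj hf unfolding T_def by simp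
  have Tm: "T \<in> measurable (PiM I (\<lambda>_. M)) (PiM {..<r} (\<lambda>_. M))"
    unfolding T_def using hf by (intro measurable_restrict) (auto intro!: measurable_component_singleton)
  have mm: "(\<lambda>\<omega>. (\<Sum>i<r. \<omega> i) / real r) \<in> borel_measurable (PiM {..<r} (\<lambda>_. M))"
    by measurable
  have "distr (PiM I (\<lambda>_. M)) borel (\<lambda>\<omega>. (\<Sum>j\<in>B. \<omega> j) / real r)
      = distr (PiM I (\<lambda>_. M)) borel ((\<lambda>\<omega>. (\<Sum>i<r. \<omega> i) / real r) \<circ> T)"
  proof (intro distr_cong refl)
    fix \<omega> assume "\<omega> \<in> space (PiM I (\<lambda>_. M))"
    have "(\<Sum>i<r. T \<omega> i) = (\<Sum>i<r. \<omega> (h i))" by (simp add: T_def)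
    also have "\<dots> = (\<Sum>j\<in>B. \<omega> j)" using sum.reindex_bij_betw[OF h] .
    finally show "(\<Sum>j\<in>B. \<omega> j) / real r = ((\<lambda>\<omega>. (\<Sum>i<r. \<omega> i) / real r) \<circ> T) \<omega>" by simp
  qed
  also have "\<dots> = distr (distr (PiM I (\<lambda>_. M)) (PiM {..<r} (\<lambda>_. M)) T) borel (\<lambda>\<omega>. (\<Sum>i<r. \<omega> i) / real r)"
    by (rule distr_distr[OF mm Tm, symmetric])
  also have "\<dots> = distr (PiM {..<r} (\<lambda>_. M)) borel (\<lambda>\<omega>. (\<Sum>i<r. \<omega> i) / real r)"
    by (simp only: d)
  finally show ?thesis .
qed

lemma card_blocks:
  fixes g :: "nat \<Rightarrow> nat"
  assumes g_range: "\<forall>i<n. g i < p"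
    and g_card: "\<forall>k<p. card {i. i < n \<and> g i = k} = r"
  shows "card {i. i < n \<and> P (g i)} = r * card {k. k < p \<and> P k}"
proof -
  have eq: "{i. i < n \<and> P (g i)} = (\<Union>k\<in>{k. k < p \<and> P k}. {i. i < n \<and> g i = k})"
    using g_range by auto
  have "card (\<Union>k\<in>{k. k < p \<and> P k}. {i. i < n \<and> g i = k}) = (\<Sum>k\<in>{k. k < p \<and> P k}. card {i. i < n \<and> g i = k})"
    by (intro card_UN_disjoint) auto
  also have "\<dots> = (\<Sum>k\<in>{k. k < p \<and> P k}. r)" using g_card by (intro sum.cong) auto
  finally show ?thesis unfolding eq by simp
qed

lemma empirical_bound:
  fixes M :: "real measure" and p r n :: nat and g :: "nat \<Rightarrow> nat" and t :: real
  assumes M_prob: "prob_space M" and M_borel: "sets M = sets borel"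
    and p_pos: "p \<ge> 1" and r_pos: "r \<ge> 1" and n_def: "n = p * r"
    and g_range: "\<forall>i<n. g i < p"
    and g_card: "\<forall>k<p. card {i. i < n \<and> g i = k} = r"
  shows "(\<integral>\<^sup>+ \<omega>. ennreal \<bar>mean_cdf M r t - real (card {i. i < n \<and>
                 (\<Sum>j\<in>{j. j < n \<and> g j = g i}. \<omega> j) / real r \<le> t}) / real n\<bar> \<partial>(PiM {..<n} (\<lambda>_. M)))
       \<le> ennreal (1 / sqrt (real p)) * ennreal (sqrt (mean_cdf M r t * (1 - mean_cdf M r t)))"
proof -
  let ?\<Omega> = "PiM {..<n} (\<lambda>_. M)"
  interpret M: prob_space M by fact
  interpret \<Omega>: prob_space ?\<Omega> by (rule prob_space_PiM) (rule M_prob)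
  define B where "B k = {j. j < n \<and> g j = k}" for k
  define A where "A k \<omega> = (\<Sum>j\<in>B k. \<omega> j) / real r" for k and \<omega> :: "nat \<Rightarrow> real"
  define c where "c = mean_cdf M r t"
  define I where "I k \<omega> = (if A k \<omega> \<le> t then 1 else 0::real)" for k \<omega>
  define Y where "Y k \<omega> = I k \<omega> - c" for k \<omega>
  define S where "S \<omega> = (\<Sum>k<p. Y k \<omega>)" for \<omega>
  have n0: "n \<noteq> 0" using p_pos r_pos n_def by simp
  have Bsub: "B k \<subseteq> {..<n}" for k by (auto simp: B_def)
  have Bfin: "finite (B k)" for k using Bsub finite_subset by blast
  have Bcard: "k < p \<Longrightarrow> card (B k) = r" for k using g_card by (simp add: B_def)
  have Bdisj: "k \<noteq> l \<Longrightarrow> B k \<inter> B l = {}" for k l by (auto simp: B_def)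
  have xs: "(\<integral>x. x^2 \<partial>M) = (\<integral>x. x^2 \<partial>M)" ..
  have cdfD: "cdf (distr (PiM {..<r} (\<lambda>_. M)) borel (\<lambda>\<omega>. (\<Sum>i<r. \<omega> i) / real r)) = mean_cdf M r"
    unfolding mean_cdf_def ..
  interpret D: real_distribution "distr (PiM {..<r} (\<lambda>_. M)) borel (\<lambda>\<omega>. (\<Sum>i<r. \<omega> i) / real r)"
  proof -
    interpret P: prob_space "PiM {..<r} (\<lambda>_. M)" by (rule prob_space_PiM) (rule M_prob)
    have [measurable_cong]: "sets M = sets borel" by fact
    show "real_distribution (distr (PiM {..<r} (\<lambda>_. M)) borel (\<lambda>\<omega>. (\<Sum>i<r. \<omega> i) / real r))"
      by (rule P.real_distribution_distr) measurable
  qed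
  have c01: "0 \<le> c" "c \<le> 1"
    unfolding c_def cdfD[symmetric] using D.cdf_nonneg D.cdf_bounded_prob by auto
  have cm: "j \<in> J \<Longrightarrow> (\<lambda>\<omega>. \<omega> j) \<in> borel_measurable (PiM J (\<lambda>_. M))" for j J
    using measurable_component_singleton[of j J "\<lambda>_. M"] measurable_cong_sets[OF refl M_borel] by blast
  have Bm: "(\<lambda>\<omega>. (\<Sum>j\<in>B k. \<omega> j) / real r) \<in> borel_measurable (PiM J (\<lambda>_. M))" if "B k \<subseteq> J" for k J
    using that by (intro borel_measurable_divide borel_measurable_const borel_measurable_sum cm) auto
  have Am[measurable]: "A k \<in> borel_measurable ?\<Omega>" for k
    unfolding A_def[abs_def] using Bm[OF Bsub] .
  have Im[measurable]: "I k \<in> borel_measurable ?\<Omega>" for k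
    unfolding I_def[abs_def] by measurable
  have Ym[measurable]: "Y k \<in> borel_measurable ?\<Omega>" for k
    unfolding Y_def[abs_def] by measurable
  have Ib: "\<bar>I k \<omega>\<bar> \<le> 1" for k \<omega> by (simp add: I_def)
  have Yb: "\<bar>Y k \<omega>\<bar> \<le> 1" for k \<omega> using c01 by (simp add: Y_def I_def)
  have Iint: "integrable ?\<Omega> (I k)" for k
    by (rule \<Omega>.integrable_const_bound[where B=1]) (auto simp: Ib)
  have YYint: "integrable ?\<Omega> (\<lambda>\<omega>. Y k \<omega> * Y l \<omega>)" for k l
  proof (rule \<Omega>.integrable_const_bound[where B=1])
    show "AE x in ?\<Omega>. norm (Y k x * Y l x) \<le> 1"
      using Yb by (auto simp: abs_mult intro!: mult_le_one)
  qed simp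
  have EI: "(\<integral>\<omega>. I k \<omega> \<partial>?\<Omega>) = c" if "k < p" for k
  proof -
    have "(\<integral>\<omega>. I k \<omega> \<partial>?\<Omega>) = (\<integral>\<omega>. indicator {\<omega>\<in>space ?\<Omega>. A k \<omega> \<le> t} \<omega> \<partial>?\<Omega>)"
      by (intro Bochner_Integration.integral_cong) (auto simp: I_def)
    also have "\<dots> = measure ?\<Omega> {\<omega>\<in>space ?\<Omega>. A k \<omega> \<le> t}"
      by (simp add: Int_absorb2 subsetI)
    also have "\<dots> = cdf (distr ?\<Omega> borel (A k)) t"
      by (rule cdf_distr_eq[symmetric]) (auto intro: \<Omega>.prob_space_axioms)
    also have "distr ?\<Omega> borel (A k) = distr (PiM {..<r} (\<lambda>_. M)) borel (\<lambda>\<omega>. (\<Sum>i<r. \<omega> i) / real r)"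
      unfolding A_def[abs_def] by (rule block_distr[OF M_prob M_borel Bsub Bfin Bcard[OF that]])
    finally show ?thesis by (simp add: cdfD c_def)
  qed
  have EY: "(\<integral>\<omega>. Y k \<omega> \<partial>?\<Omega>) = 0" if "k < p" for k
    using EI[OF that] Iint[of k] by (simp add: Y_def \<Omega>.prob_space)
  have EYY: "(\<integral>\<omega>. Y k \<omega> * Y k \<omega> \<partial>?\<Omega>) = c * (1 - c)" if "k < p" for k
  proof -
    have "(\<lambda>\<omega>. Y k \<omega> * Y k \<omega>) = (\<lambda>\<omega>. (1 - 2 * c) * I k \<omega> + c^2)"
      by (auto simp: Y_def I_def fun_eq_iff power2_eq_square algebra_simps)
    then show ?thesis using EI[OF that] Iint[of k]
      by (simp add: \<Omega>.prob_space power2_eq_square algebra_simps)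
  qed
  have coords: "\<Omega>.indep_vars (\<lambda>_. M) (\<lambda>i \<omega>. \<omega> i) {..<n}"
    using PiM_coords_indep[OF M_prob M_borel, of "{..<n}"] n0 by auto
  have EYY': "(\<integral>\<omega>. Y k \<omega> * Y l \<omega> \<partial>?\<Omega>) = 0" if "k < p" "l < p" "k \<noteq> l" for k l
  proof -
    define Z where "Z k x = (if (\<Sum>j\<in>B k. x j) / real r \<le> t then 1 else 0) - c" for k and x :: "nat \<Rightarrow> real"
    have Zm: "Z k \<in> borel_measurable (PiM (B k) (\<lambda>_. M))" for k
      unfolding Z_def[abs_def] using Bm[of k "B k"] by measurable
    have ind: "\<Omega>.indep_var (PiM (B k) (\<lambda>_. M)) (\<lambda>\<omega>. restrict (\<lambda>i. \<omega> i) (B k))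
                          (PiM (B l) (\<lambda>_. M)) (\<lambda>\<omega>. restrict (\<lambda>i. \<omega> i) (B l))"
      by (rule \<Omega>.indep_var_restrict[OF coords Bdisj[OF that(3)] Bsub Bsub])
    have ind2: "\<Omega>.indep_var borel (Z k \<circ> (\<lambda>\<omega>. restrict (\<lambda>i. \<omega> i) (B k))) borel (Z l \<circ> (\<lambda>\<omega>. restrict (\<lambda>i. \<omega> i) (B l)))"
      by (rule \<Omega>.indep_var_compose[OF ind Zm Zm])
    have comp: "Z m \<circ> (\<lambda>\<omega>. restrict (\<lambda>i. \<omega> i) (B m)) = Y m" for m
      by (auto simp: fun_eq_iff Z_def Y_def I_def A_def intro!: sum.cong)
    have ind3: "\<Omega>.indep_var borel (Y k) borel (Y l)"
      using ind2 by (simp only: comp)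
    have Yint: "integrable ?\<Omega> (Y m)" for m
      by (rule \<Omega>.integrable_const_bound[where B=1]) (auto simp: Yb)
    show ?thesis
      using \<Omega>.indep_var_lebesgue_integral[OF ind3 Yint Yint] EY[OF that(1)] by simp
  qed
  have Ssq: "(\<lambda>\<omega>. (S \<omega>)^2) = (\<lambda>\<omega>. \<Sum>k<p. \<Sum>l<p. Y k \<omega> * Y l \<omega>)"
    by (auto simp: fun_eq_iff S_def power2_eq_square sum_product)
  have Sint: "integrable ?\<Omega> (\<lambda>\<omega>. (S \<omega>)^2)"
    unfolding Ssq by (intro Bochner_Integration.integrable_sum YYint)
  have ES: "(\<integral>\<omega>. (S \<omega>)^2 \<partial>?\<Omega>) = real p * (c * (1 - c))"
  proof -
    have "(\<integral>\<omega>. (S \<omega>)^2 \<partial>?\<Omega>) = (\<Sum>k<p. \<Sum>l<p. (\<integral>\<omega>. Y k \<omega> * Y l \<omega> \<partial>?\<Omega>))"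
      unfolding Ssq
      by (subst Bochner_Integration.integral_sum)
         (auto intro!: Bochner_Integration.integrable_sum sum.cong Bochner_Integration.integral_sum YYint)
    also have "\<dots> = (\<Sum>k<p. \<Sum>l<p. (if k = l then c * (1 - c) else 0))"
      by (intro sum.cong refl) (auto simp: EYY EYY')
    also have "\<dots> = real p * (c * (1 - c))" by simp
    finally show ?thesis .
  qed
  have Fhat: "real (card {i. i < n \<and> (\<Sum>j\<in>{j. j < n \<and> g j = g i}. \<omega> j) / real r \<le> t}) / real n
      = (\<Sum>k<p. I k \<omega>) / real p" for \<omega>
  proof -
    have "card {i. i < n \<and> (\<Sum>j\<in>{j. j < n \<and> g j = g i}. \<omega> j) / real r \<le> t}
        = r * card {k. k < p \<and> A k \<omega> \<le> t}"
      using card_blocks[OF g_range g_card, of "\<lambda>k. A k \<omega> \<le> t"] by (simp add: A_def B_def)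
    moreover have "real (card {k. k < p \<and> A k \<omega> \<le> t}) = (\<Sum>k<p. I k \<omega>)"
    proof -
      have "{k. k < p \<and> A k \<omega> \<le> t} = {k\<in>{..<p}. A k \<omega> \<le> t}" by auto
      then have "real (card {k. k < p \<and> A k \<omega> \<le> t}) = (\<Sum>k\<in>{k\<in>{..<p}. A k \<omega> \<le> t}. 1)" by simp
      also have "\<dots> = (\<Sum>k<p. I k \<omega>)" by (subst sum.inter_filter) (auto simp: I_def)
      finally show ?thesis .
    qed
    ultimately show ?thesis using n_def r_pos by (simp add: field_simps)
  qed
  have diff: "\<bar>c - (\<Sum>k<p. I k \<omega>) / real p\<bar> = \<bar>S \<omega> / real p\<bar>" for \<omega>
  proof -
    have "S \<omega> = (\<Sum>k<p. I k \<omega>) - real p * c" by (simp add: S_def Y_def sum_subtractf)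
    then have "S \<omega> / real p = (\<Sum>k<p. I k \<omega>) / real p - c" using p_pos by (simp add: field_simps)
    then show ?thesis by simp
  qed
  have "(\<integral>\<^sup>+ \<omega>. ennreal \<bar>mean_cdf M r t - real (card {i. i < n \<and>
                 (\<Sum>j\<in>{j. j < n \<and> g j = g i}. \<omega> j) / real r \<le> t}) / real n\<bar> \<partial>?\<Omega>)
      = (\<integral>\<^sup>+ \<omega>. ennreal \<bar>S \<omega> / real p\<bar> \<partial>?\<Omega>)"
    by (intro nn_integral_cong) (simp add: Fhat diff c_def[symmetric])
  also have "\<dots> \<le> ennreal (sqrt (\<integral>\<omega>. (S \<omega> / real p)^2 \<partial>?\<Omega>))"
  proof (rule abs_le_sqrt_sq[OF \<Omega>.prob_space_axioms])
    show "(\<lambda>\<omega>. S \<omega> / real p) \<in> borel_measurable ?\<Omega>" unfolding S_def by measurable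
    show "integrable ?\<Omega> (\<lambda>\<omega>. (S \<omega> / real p)^2)"
      using Sint by (simp add: power_divide)
  qed
  also have "(\<integral>\<omega>. (S \<omega> / real p)^2 \<partial>?\<Omega>) = c * (1 - c) / real p"
    using ES p_pos by (simp add: power_divide power2_eq_square)
  also have "ennreal (sqrt (c * (1 - c) / real p)) = ennreal (1 / sqrt (real p)) * ennreal (sqrt (c * (1 - c)))"
    using c01 by (simp add: real_sqrt_divide ennreal_mult[symmetric])
  finally show ?thesis by (simp add: c_def)
qed

lemma cdf_measurable:
  assumes "real_distribution N"
  shows "cdf N \<in> borel_measurable borel"
proof -
  interpret real_distribution N by fact
  show ?thesis by (rule borel_measurable_mono) (auto intro!: monoI cdf_nondecreasing)
qed

lemma W1_triangle:
  assumes [measurable]: "F \<in> borel_measurable borel" "G \<in> borel_measurable borel" "H \<in> borel_measurable borel"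
  shows "W1 F H \<le> W1 F G + W1 G H"
proof -
  have "W1 F H \<le> (\<integral>\<^sup>+ x. ennreal \<bar>F x - G x\<bar> + ennreal \<bar>G x - H x\<bar> \<partial>lborel)"
    unfolding W1_def by (intro nn_integral_mono) (simp add: ennreal_plus[symmetric] del: ennreal_plus)
  also have "\<dots> = W1 F G + W1 G H"
    unfolding W1_def by (rule nn_integral_add) auto
  finally show ?thesis .
qed

lemma W1_commute: "W1 F G = W1 G F"
  unfolding W1_def by (simp add: abs_minus_commute)

lemma card_as_sum: "real (card {i. i < (n::nat) \<and> P i}) = (\<Sum>i<n. if P i then 1 else 0)"
proof -
  have "{i. i < n \<and> P i} = {i\<in>{..<n}. P i}" by auto
  then have "real (card {i. i < n \<and> P i}) = (\<Sum>i\<in>{i\<in>{..<n}. P i}. 1)" by simp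
  also have "\<dots> = (\<Sum>i<n. if P i then 1 else 0)" by (subst sum.inter_filter[OF finite_lessThan]) simp
  finally show ?thesis .
qed

theorem proposition2:
  fixes M :: "real measure" and \<mu> \<sigma> :: real and p r n :: nat
    and g :: "nat \<Rightarrow> nat"
  assumes M_prob: "prob_space M"
    and M_borel: "sets M = sets borel"
    and sq_int: "integrable M (\<lambda>x. x ^ 2)"
    and mu_def: "\<mu> = integral\<^sup>L M (\<lambda>x. x)"
    and sigma_def: "\<sigma> = sqrt (integral\<^sup>L M (\<lambda>x. (x - \<mu>) ^ 2))"
    and sigma_pos: "\<sigma> > 0"
    and p_pos: "p \<ge> 1" and r_pos: "r \<ge> 1" and n_def: "n = p * r"
    and g_range: "\<forall>i<n. g i < p"
    and g_card: "\<forall>k<p. card {i. i < n \<and> g i = k} = r"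
  shows
    "(\<integral>\<^sup>+ \<omega>. W1 (cdf M)
          (\<lambda>t. real (card {i. i < n \<and>
                 (\<Sum>j\<in>{j. j < n \<and> g j = g i}. \<omega> j) / real r \<le> t}) / real n)
       \<partial>(PiM {..<n} (\<lambda>_. M)))
     \<le> ennreal (\<sigma> * (1 - 1 / sqrt (real r)))
       + ennreal (1 / sqrt (real p)) *
           (\<integral>\<^sup>+ t. ennreal (sqrt (mean_cdf M r t * (1 - mean_cdf M r t))) \<partial>lborel)
       + ennreal (\<sigma> * sqrt (2 * (1 - qq_corr (cdf M) (normal_cdf \<mu> \<sigma>) \<mu> \<mu> \<sigma> \<sigma>)))
       + ennreal (\<sigma> * sqrt (2 / real r *
           (1 - qq_corr (mean_cdf M r) (normal_cdf \<mu> (\<sigma> / sqrt (real r)))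
                  \<mu> \<mu> (\<sigma> / sqrt (real r)) (\<sigma> / sqrt (real r)))))"
proof -
  let ?\<Omega> = "PiM {..<n} (\<lambda>_. M)"
  interpret M: prob_space M by fact
  interpret \<Omega>: prob_space ?\<Omega> by (rule prob_space_PiM) (rule M_prob)
  interpret pair_sigma_finite lborel ?\<Omega> by unfold_locales
  have MD: "real_distribution M"
    unfolding real_distribution_def real_distribution_axioms_def using M_prob M_borel by simp
  define D where "D = distr (PiM {..<r} (\<lambda>_. M)) borel (\<lambda>\<omega>. (\<Sum>i<r. \<omega> i) / real r)"
  define N1 where "N1 = density lborel (normal_density \<mu> \<sigma>)"
  define s where "s = \<sigma> / sqrt (real r)"
  define N2 where "N2 = density lborel (normal_density \<mu> s)"
  have s_pos: "s > 0" using sigma_pos r_pos by (simp add: s_def)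
  have var: "(\<integral>x. (x - \<mu>)^2 \<partial>M) = \<sigma>^2"
    using sigma_def sigma_pos by (metis integral_nonneg_AE AE_I2 zero_le_power2 real_sqrt_pow2)
  note Dfacts = mean_dist_facts[OF M_prob M_borel sq_int mu_def var r_pos, folded D_def]
  note N1facts = normal_facts[OF sigma_pos, of \<mu>, folded N1_def]
  note N2facts = normal_facts[OF s_pos, of \<mu>, folded N2_def]
  have cdfN1: "cdf N1 = normal_cdf \<mu> \<sigma>" unfolding N1_def normal_cdf_def ..
  have cdfN2: "cdf N2 = normal_cdf \<mu> s" unfolding N2_def normal_cdf_def ..
  have Fm[measurable]: "cdf M \<in> borel_measurable borel" by (rule cdf_measurable[OF MD])
  have Gm[measurable]: "mean_cdf M r \<in> borel_measurable borel"
    using cdf_measurable[OF Dfacts(1)] Dfacts(4) by simp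
  have N1m[measurable]: "normal_cdf \<mu> \<sigma> \<in> borel_measurable borel"
    using cdf_measurable[OF N1facts(1)] cdfN1 by simp
  have N2m[measurable]: "normal_cdf \<mu> s \<in> borel_measurable borel"
    using cdf_measurable[OF N2facts(1)] cdfN2 by simp
  have t1: "W1 (cdf M) (normal_cdf \<mu> \<sigma>) \<le> ennreal (\<sigma> * sqrt (2 * (1 - qq_corr (cdf M) (normal_cdf \<mu> \<sigma>) \<mu> \<mu> \<sigma> \<sigma>)))"
  proof -
    have "W1 (cdf M) (normal_cdf \<mu> \<sigma>) \<le> ennreal (sqrt (2 * \<sigma>^2 * (1 - qq_corr (cdf M) (normal_cdf \<mu> \<sigma>) \<mu> \<mu> \<sigma> \<sigma>)))"
      using W1_qq[OF MD N1facts(1) sq_int N1facts(2) var N1facts(3) sigma_pos] by (simp add: cdfN1)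
    also have "sqrt (2 * \<sigma>^2 * (1 - qq_corr (cdf M) (normal_cdf \<mu> \<sigma>) \<mu> \<mu> \<sigma> \<sigma>))
        = \<sigma> * sqrt (2 * (1 - qq_corr (cdf M) (normal_cdf \<mu> \<sigma>) \<mu> \<mu> \<sigma> \<sigma>))"
    proof -
      have e: "2 * \<sigma>^2 * (1 - qq_corr (cdf M) (normal_cdf \<mu> \<sigma>) \<mu> \<mu> \<sigma> \<sigma>)
          = \<sigma>^2 * (2 * (1 - qq_corr (cdf M) (normal_cdf \<mu> \<sigma>) \<mu> \<mu> \<sigma> \<sigma>))" by (simp only: ac_simps)
      show ?thesis unfolding e real_sqrt_mult using sigma_pos by (simp only: real_sqrt_abs abs_of_pos)
    qed
    finally show ?thesis .
  qed
  have t2: "W1 (normal_cdf \<mu> \<sigma>) (normal_cdf \<mu> s) \<le> ennreal (\<sigma> * (1 - 1 / sqrt (real r)))"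
    unfolding s_def by (rule normal_W1[OF sigma_pos]) (use r_pos in simp)
  have t3: "W1 (normal_cdf \<mu> s) (mean_cdf M r) \<le> ennreal (\<sigma> * sqrt (2 / real r *
           (1 - qq_corr (mean_cdf M r) (normal_cdf \<mu> s) \<mu> \<mu> s s)))"
  proof -
    have "W1 (normal_cdf \<mu> s) (mean_cdf M r) = W1 (mean_cdf M r) (normal_cdf \<mu> s)" by (rule W1_commute)
    also have "\<dots> \<le> ennreal (sqrt (2 * s^2 * (1 - qq_corr (mean_cdf M r) (normal_cdf \<mu> s) \<mu> \<mu> s s)))"
      using W1_qq[OF Dfacts(1) N2facts(1) Dfacts(2) N2facts(2) _ N2facts(3) s_pos] Dfacts(3)
      by (simp add: cdfN2 Dfacts(4) s_def)
    also have "sqrt (2 * s^2 * (1 - qq_corr (mean_cdf M r) (normal_cdf \<mu> s) \<mu> \<mu> s s))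
        = \<sigma> * sqrt (2 / real r * (1 - qq_corr (mean_cdf M r) (normal_cdf \<mu> s) \<mu> \<mu> s s))"
    proof -
      have "2 * s^2 * (1 - qq_corr (mean_cdf M r) (normal_cdf \<mu> s) \<mu> \<mu> s s)
          = \<sigma>^2 * (2 / real r * (1 - qq_corr (mean_cdf M r) (normal_cdf \<mu> s) \<mu> \<mu> s s))"
        using r_pos by (simp add: s_def power_divide)
      then show ?thesis using sigma_pos by (simp only: real_sqrt_mult real_sqrt_abs abs_of_pos)
    qed
    finally show ?thesis .
  qed
  have WFG: "W1 (cdf M) (mean_cdf M r) \<le> ennreal (\<sigma> * (1 - 1 / sqrt (real r)))
       + ennreal (\<sigma> * sqrt (2 * (1 - qq_corr (cdf M) (normal_cdf \<mu> \<sigma>) \<mu> \<mu> \<sigma> \<sigma>)))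
       + ennreal (\<sigma> * sqrt (2 / real r * (1 - qq_corr (mean_cdf M r) (normal_cdf \<mu> s) \<mu> \<mu> s s)))"
  proof -
    have a: "W1 (cdf M) (mean_cdf M r) \<le> W1 (cdf M) (normal_cdf \<mu> \<sigma>) + W1 (normal_cdf \<mu> \<sigma>) (mean_cdf M r)"
      by (rule W1_triangle) auto
    have b: "W1 (normal_cdf \<mu> \<sigma>) (mean_cdf M r) \<le> W1 (normal_cdf \<mu> \<sigma>) (normal_cdf \<mu> s) + W1 (normal_cdf \<mu> s) (mean_cdf M r)"
      by (rule W1_triangle) auto
    have c: "W1 (cdf M) (normal_cdf \<mu> \<sigma>) + (W1 (normal_cdf \<mu> \<sigma>) (normal_cdf \<mu> s) + W1 (normal_cdf \<mu> s) (mean_cdf M r))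
       \<le> ennreal (\<sigma> * sqrt (2 * (1 - qq_corr (cdf M) (normal_cdf \<mu> \<sigma>) \<mu> \<mu> \<sigma> \<sigma>)))
       + (ennreal (\<sigma> * (1 - 1 / sqrt (real r)))
       + ennreal (\<sigma> * sqrt (2 / real r * (1 - qq_corr (mean_cdf M r) (normal_cdf \<mu> s) \<mu> \<mu> s s))))"
      by (intro add_mono t1 t2 t3)
    have d: "W1 (cdf M) (mean_cdf M r) \<le> W1 (cdf M) (normal_cdf \<mu> \<sigma>) + (W1 (normal_cdf \<mu> \<sigma>) (normal_cdf \<mu> s) + W1 (normal_cdf \<mu> s) (mean_cdf M r))"
      using a b by (meson add_left_mono order_trans)
    have e: "ennreal (\<sigma> * sqrt (2 * (1 - qq_corr (cdf M) (normal_cdf \<mu> \<sigma>) \<mu> \<mu> \<sigma> \<sigma>)))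
       + (ennreal (\<sigma> * (1 - 1 / sqrt (real r)))
       + ennreal (\<sigma> * sqrt (2 / real r * (1 - qq_corr (mean_cdf M r) (normal_cdf \<mu> s) \<mu> \<mu> s s))))
       = ennreal (\<sigma> * (1 - 1 / sqrt (real r)))
       + ennreal (\<sigma> * sqrt (2 * (1 - qq_corr (cdf M) (normal_cdf \<mu> \<sigma>) \<mu> \<mu> \<sigma> \<sigma>)))
       + ennreal (\<sigma> * sqrt (2 / real r * (1 - qq_corr (mean_cdf M r) (normal_cdf \<mu> s) \<mu> \<mu> s s)))"
      by (simp only: ac_simps)
    show ?thesis using order_trans[OF d c] unfolding e .
  qed
  define a where "a i \<omega> = (\<Sum>j\<in>{j. j < n \<and> g j = g i}. \<omega> j) / real r" for i and \<omega> :: "nat \<Rightarrow> real"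
  define H where "H \<omega> t = real (card {i. i < n \<and> a i \<omega> \<le> t}) / real n" for \<omega> t
  have cm: "j \<in> J \<Longrightarrow> (\<lambda>\<omega>. \<omega> j) \<in> borel_measurable (PiM J (\<lambda>_. M))" for j J
    using measurable_component_singleton[of j J "\<lambda>_. M"] measurable_cong_sets[OF refl M_borel] by blast
  have am[measurable]: "a i \<in> borel_measurable ?\<Omega>" for i
    unfolding a_def[abs_def]
    by (intro borel_measurable_divide borel_measurable_const borel_measurable_sum cm) auto
  have Hsum: "H \<omega> t = (\<Sum>i<n. if a i \<omega> \<le> t then 1 else 0) / real n" for \<omega> t
    unfolding H_def card_as_sum ..
  have Hm: "(\<lambda>(t, \<omega>). ennreal \<bar>mean_cdf M r t - H \<omega> t\<bar>) \<in> borel_measurable (lborel \<Otimes>\<^sub>M ?\<Omega>)"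
    unfolding Hsum by measurable
  have Hm2: "(\<lambda>(\<omega>, t). ennreal \<bar>mean_cdf M r t - H \<omega> t\<bar>) \<in> borel_measurable (?\<Omega> \<Otimes>\<^sub>M lborel)"
    unfolding Hsum by measurable
  have Hm1[measurable]: "H \<omega> \<in> borel_measurable borel" for \<omega>
    unfolding Hsum[abs_def] by measurable
  have emp: "(\<integral>\<^sup>+ \<omega>. ennreal \<bar>mean_cdf M r t - H \<omega> t\<bar> \<partial>?\<Omega>)
       \<le> ennreal (1 / sqrt (real p)) * ennreal (sqrt (mean_cdf M r t * (1 - mean_cdf M r t)))" for t
    using empirical_bound[OF M_prob M_borel p_pos r_pos n_def g_range g_card, of t]
    unfolding H_def a_def .
  have Wm: "(\<lambda>\<omega>. W1 (mean_cdf M r) (H \<omega>)) \<in> borel_measurable ?\<Omega>"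
    unfolding W1_def using Hm2 by (rule lborel.borel_measurable_nn_integral)
  have part2: "(\<integral>\<^sup>+ \<omega>. W1 (mean_cdf M r) (H \<omega>) \<partial>?\<Omega>)
      \<le> ennreal (1 / sqrt (real p)) * (\<integral>\<^sup>+ t. ennreal (sqrt (mean_cdf M r t * (1 - mean_cdf M r t))) \<partial>lborel)"
  proof -
    have "(\<integral>\<^sup>+ \<omega>. W1 (mean_cdf M r) (H \<omega>) \<partial>?\<Omega>)
      = (\<integral>\<^sup>+ t. (\<integral>\<^sup>+ \<omega>. ennreal \<bar>mean_cdf M r t - H \<omega> t\<bar> \<partial>?\<Omega>) \<partial>lborel)"
      unfolding W1_def using Fubini'[OF Hm] by simp
    also have "\<dots> \<le> (\<integral>\<^sup>+ t. ennreal (1 / sqrt (real p)) * ennreal (sqrt (mean_cdf M r t * (1 - mean_cdf M r t))) \<partial>lborel)"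
      by (intro nn_integral_mono emp)
    also have "\<dots> = ennreal (1 / sqrt (real p)) * (\<integral>\<^sup>+ t. ennreal (sqrt (mean_cdf M r t * (1 - mean_cdf M r t))) \<partial>lborel)"
      by (rule nn_integral_cmult) measurable
    finally show ?thesis .
  qed
  have "(\<integral>\<^sup>+ \<omega>. W1 (cdf M) (H \<omega>) \<partial>?\<Omega>)
      \<le> (\<integral>\<^sup>+ \<omega>. W1 (cdf M) (mean_cdf M r) + W1 (mean_cdf M r) (H \<omega>) \<partial>?\<Omega>)"
    by (intro nn_integral_mono W1_triangle) auto
  also have "\<dots> = W1 (cdf M) (mean_cdf M r) + (\<integral>\<^sup>+ \<omega>. W1 (mean_cdf M r) (H \<omega>) \<partial>?\<Omega>)"
    using Wm by (subst nn_integral_add) (auto simp: \<Omega>.emeasure_space_1)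
  also have "\<dots> \<le> W1 (cdf M) (mean_cdf M r) +
      ennreal (1 / sqrt (real p)) * (\<integral>\<^sup>+ t. ennreal (sqrt (mean_cdf M r t * (1 - mean_cdf M r t))) \<partial>lborel)"
    by (intro add_left_mono part2)
  finally have main: "(\<integral>\<^sup>+ \<omega>. W1 (cdf M) (H \<omega>) \<partial>?\<Omega>) \<le> W1 (cdf M) (mean_cdf M r) +
      ennreal (1 / sqrt (real p)) * (\<integral>\<^sup>+ t. ennreal (sqrt (mean_cdf M r t * (1 - mean_cdf M r t))) \<partial>lborel)" .
  have "(\<integral>\<^sup>+ \<omega>. W1 (cdf M) (H \<omega>) \<partial>?\<Omega>) \<le> ennreal (\<sigma> * (1 - 1 / sqrt (real r)))
       + ennreal (1 / sqrt (real p)) *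
           (\<integral>\<^sup>+ t. ennreal (sqrt (mean_cdf M r t * (1 - mean_cdf M r t))) \<partial>lborel)
       + ennreal (\<sigma> * sqrt (2 * (1 - qq_corr (cdf M) (normal_cdf \<mu> \<sigma>) \<mu> \<mu> \<sigma> \<sigma>)))
       + ennreal (\<sigma> * sqrt (2 / real r * (1 - qq_corr (mean_cdf M r) (normal_cdf \<mu> s) \<mu> \<mu> s s)))"
  proof -
    have "W1 (cdf M) (mean_cdf M r) +
      ennreal (1 / sqrt (real p)) * (\<integral>\<^sup>+ t. ennreal (sqrt (mean_cdf M r t * (1 - mean_cdf M r t))) \<partial>lborel)
      \<le> (ennreal (\<sigma> * (1 - 1 / sqrt (real r)))
       + ennreal (\<sigma> * sqrt (2 * (1 - qq_corr (cdf M) (normal_cdf \<mu> \<sigma>) \<mu> \<mu> \<sigma> \<sigma>)))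
       + ennreal (\<sigma> * sqrt (2 / real r * (1 - qq_corr (mean_cdf M r) (normal_cdf \<mu> s) \<mu> \<mu> s s))))
       + ennreal (1 / sqrt (real p)) * (\<integral>\<^sup>+ t. ennreal (sqrt (mean_cdf M r t * (1 - mean_cdf M r t))) \<partial>lborel)"
      by (intro add_right_mono WFG)
    with main show ?thesis by (simp only: ac_simps)
  qed
  then show ?thesis unfolding H_def a_def s_def .
qed

end
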